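(* Let $G$ be a group and let $\rho$ and $\rho'$ be finite-dimensional representations of $G$ over a field $k$ with equal determinant. Suppose there exists a normal subgroup $H$ of $G$ such that $\rho|_H$ and $\rho'|_H$ are absolutely irreducible and isomorphic. Then there exists a finite index subgroup $G'$ of $G$ such that $\rho|_{G'}$ and $\rho'|_{G'}$ are isomorphic. *)

theory Defs
  imports "HOL-Algebra.Coset" "HOL-Algebra.Algebraic_Closure_Type" "Jordan_Normal_Form.Determinant"
begin

definition is_rep :: "('g, 'b) monoid_scheme \<Rightarrow> nat \<Rightarrow> ('g \<Rightarrow> 'k::field mat) \<Rightarrow> bool" where
  "is_rep G n \<rho> \<longleftrightarrow>
     (\<forall>g\<in>carrier G. \<rho> g \<in> carrier_mat n n) \<and>
     (\<forall>g\<in>carrier G. \<forall>h\<in>carrier G. \<rho> (g \<otimes>\<^bsub>G\<^esub> h) = \<rho> g * \<rho> h) \<and>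
     \<rho> \<one>\<^bsub>G\<^esub> = 1\<^sub>m n"

definition invariant_subspace :: "'g set \<Rightarrow> nat \<Rightarrow> ('g \<Rightarrow> 'k::field mat) \<Rightarrow> 'k vec set \<Rightarrow> bool" where
  "invariant_subspace S n \<rho> W \<longleftrightarrow>
     W \<subseteq> carrier_vec n \<and> 0\<^sub>v n \<in> W \<and>
     (\<forall>v\<in>W. \<forall>w\<in>W. v + w \<in> W) \<and>
     (\<forall>c. \<forall>v\<in>W. c \<cdot>\<^sub>v v \<in> W) \<and>
     (\<forall>g\<in>S. \<forall>v\<in>W. \<rho> g *\<^sub>v v \<in> W)"

definition irreducible_on :: "'g set \<Rightarrow> nat \<Rightarrow> ('g \<Rightarrow> 'k::field mat) \<Rightarrow> bool" where
  "irreducible_on S n \<rho> \<longleftrightarrow> n > 0 \<and>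
     (\<forall>W. invariant_subspace S n \<rho> W \<longrightarrow> W = {0\<^sub>v n} \<or> W = carrier_vec n)"

definition abs_irreducible_on :: "'g set \<Rightarrow> nat \<Rightarrow> ('g \<Rightarrow> 'k::field mat) \<Rightarrow> bool" where
  "abs_irreducible_on S n \<rho> \<longleftrightarrow> irreducible_on S n (\<lambda>g. map_mat to_ac (\<rho> g))"

definition rep_iso_on :: "'g set \<Rightarrow> nat \<Rightarrow> ('g \<Rightarrow> 'k::field mat) \<Rightarrow> nat \<Rightarrow> ('g \<Rightarrow> 'k mat) \<Rightarrow> bool" where
  "rep_iso_on S n \<rho> n' \<rho>' \<longleftrightarrow> n = n' \<and>
     (\<exists>P\<in>carrier_mat n n. invertible_mat P \<and> (\<forall>g\<in>S. P * \<rho> g = \<rho>' g * P))"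

end

theory Submission
  imports Defs "Jordan_Normal_Form.Char_Poly"
begin


lemma ac_eigen:
  fixes M :: "'a::alg_closed_field mat"
  assumes "M \<in> carrier_mat n n" "n > 0"
  shows "\<exists>l v. v \<in> carrier_vec n \<and> v \<noteq> 0\<^sub>v n \<and> M *\<^sub>v v = l \<cdot>\<^sub>v v"
proof -
  from degree_monic_char_poly[OF assms(1)] assms(2)
  have "degree (char_poly M) > 0" by auto
  from alg_closed_imp_poly_has_root[OF this] obtain l where "poly (char_poly M) l = 0" by auto
  with eigenvalue_root_char_poly[OF assms(1)] have "eigenvalue M l" by auto
  thus ?thesis unfolding eigenvalue_def eigenvector_def using assms(1) by auto
qed

interpretation to_ac_hom: comm_ring_hom "to_ac :: 'a::field \<Rightarrow> 'a alg_closure"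
  by unfold_locales simp_all

lemma schur:
  fixes M :: "'k::field mat" and \<rho> :: "'g \<Rightarrow> 'k mat"
  assumes irr: "abs_irreducible_on H n \<rho>" and M: "M \<in> carrier_mat n n"
    and R: "\<forall>h\<in>H. \<rho> h \<in> carrier_mat n n"
    and comm: "\<forall>h\<in>H. M * \<rho> h = \<rho> h * M"
  shows "\<exists>c. M = c \<cdot>\<^sub>m 1\<^sub>m n"
proof -
  define M' where "M' = map_mat to_ac M"
  have M': "M' \<in> carrier_mat n n" using M unfolding M'_def by auto
  have irr': "irreducible_on H n (\<lambda>g. map_mat to_ac (\<rho> g))"
    using irr unfolding abs_irreducible_on_def .
  hence n: "n > 0" unfolding irreducible_on_def by auto
  obtain l v where v: "v \<in> carrier_vec n" "v \<noteq> 0\<^sub>v n" "M' *\<^sub>v v = l \<cdot>\<^sub>v v"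
    using ac_eigen[OF M' n] by auto
  define W where "W = {w \<in> carrier_vec n. M' *\<^sub>v w = l \<cdot>\<^sub>v w}"
  have comm': "M' * map_mat to_ac (\<rho> h) = map_mat to_ac (\<rho> h) * M'" if "h \<in> H" for h
    using comm R that M unfolding M'_def
    by (metis to_ac_hom.mat_hom_mult)
  have inv: "invariant_subspace H n (\<lambda>g. map_mat to_ac (\<rho> g)) W"
    unfolding invariant_subspace_def
  proof (intro conjI ballI allI)
    show "W \<subseteq> carrier_vec n" unfolding W_def by auto
    show "0\<^sub>v n \<in> W" unfolding W_def using M' by auto
  next
    fix a b assume "a \<in> W" "b \<in> W"
    thus "a + b \<in> W" unfolding W_def using M'
      by (auto simp: mult_add_distrib_mat_vec smult_add_distrib_vec)
  next
    fix c a assume "a \<in> W"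
    thus "c \<cdot>\<^sub>v a \<in> W" unfolding W_def using M'
      by (auto simp: mult_mat_vec smult_smult_assoc mult.commute)
  next
    fix h a assume h: "h \<in> H" and a: "a \<in> W"
    let ?R = "map_mat to_ac (\<rho> h)"
    have Rc: "?R \<in> carrier_mat n n" using R h by auto
    have "M' *\<^sub>v (?R *\<^sub>v a) = (M' * ?R) *\<^sub>v a" using a Rc M' unfolding W_def
      by (simp add: assoc_mult_mat_vec)
    also have "\<dots> = (?R * M') *\<^sub>v a" using comm' h by simp
    also have "\<dots> = ?R *\<^sub>v (M' *\<^sub>v a)" using a Rc M' unfolding W_def
      by (simp add: assoc_mult_mat_vec)
    also have "\<dots> = l \<cdot>\<^sub>v (?R *\<^sub>v a)" using a Rc unfolding W_def
      by (simp add: mult_mat_vec)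
    finally show "?R *\<^sub>v a \<in> W" using a Rc unfolding W_def by auto
  qed
  have "W \<noteq> {0\<^sub>v n}" using v unfolding W_def by auto
  hence W: "W = carrier_vec n" using irr' inv unfolding irreducible_on_def by auto
  have M'e: "M' $$ (i,j) = (if i = j then l else 0)" if "i < n" "j < n" for i j
  proof -
    have "unit_vec n j \<in> W" using W that by auto
    hence "M' *\<^sub>v unit_vec n j = l \<cdot>\<^sub>v unit_vec n j" unfolding W_def by auto
    hence "(M' *\<^sub>v unit_vec n j) $ i = (l \<cdot>\<^sub>v unit_vec n j) $ i" by simp
    thus ?thesis using that M' by (simp add: scalar_prod_right_unit)
  qed
  show ?thesis
  proof (intro exI[of _ "M $$ (0,0)"] eq_matI)
    fix i j assume ij: "i < dim_row (M $$ (0,0) \<cdot>\<^sub>m 1\<^sub>m n)" "j < dim_col (M $$ (0,0) \<cdot>\<^sub>m 1\<^sub>m n)"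
    hence ij: "i < n" "j < n" by auto
    have "to_ac (M $$ (i,j)) = M' $$ (i,j)" using M ij unfolding M'_def by auto
    also have "\<dots> = (if i = j then l else 0)" using M'e ij by auto
    also have "l = to_ac (M $$ (0,0))" using M'e[of 0 0] n M unfolding M'_def by auto
    finally have "to_ac (M $$ (i,j)) = to_ac ((M $$ (0,0) \<cdot>\<^sub>m 1\<^sub>m n) $$ (i,j))"
      using ij by auto
    thus "M $$ (i,j) = (M $$ (0,0) \<cdot>\<^sub>m 1\<^sub>m n) $$ (i,j)" by simp
  qed (use M in auto)
qed


lemma mat_inv_rel:
  fixes A Ai B Bi P :: "'k::field mat"
  assumes c: "A \<in> carrier_mat n n" "Ai \<in> carrier_mat n n" "B \<in> carrier_mat n n"
    "Bi \<in> carrier_mat n n" "P \<in> carrier_mat n n"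
    and i: "A * Ai = 1\<^sub>m n" "Bi * B = 1\<^sub>m n"
    and e: "P * A = c \<cdot>\<^sub>m (B * P)"
  shows "c \<cdot>\<^sub>m (P * Ai) = Bi * P"
proof -
  have "Bi * P = Bi * P * (A * Ai)" using c i by simp
  also have "\<dots> = Bi * (P * A) * Ai"
  proof -
    have "Bi * P * (A * Ai) = Bi * (P * (A * Ai))" using c by (intro assoc_mult_mat) auto
    moreover have "Bi * (P * A) * Ai = Bi * (P * A * Ai)" using c by (intro assoc_mult_mat) auto
    moreover have "P * A * Ai = P * (A * Ai)" using c by (intro assoc_mult_mat) auto
    ultimately show ?thesis by simp
  qed
  also have "\<dots> = Bi * (c \<cdot>\<^sub>m (B * P)) * Ai" using e by simp
  also have "\<dots> = c \<cdot>\<^sub>m (Bi * (B * P) * Ai)"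
    using mult_smult_distrib[of Bi n n "B * P" n c] mult_smult_assoc_mat[of "Bi * (B * P)" n n Ai n c] c
    by simp
  also have "Bi * (B * P) = P" using c i
    by (simp add: assoc_mult_mat[of Bi n n B n P n, symmetric])
  finally show ?thesis by simp
qed

theorem lemma2p6:
  fixes G :: "('g, 'b) monoid_scheme"
    and \<rho> \<rho>' :: "'g \<Rightarrow> 'k::field mat"
    and n n' :: nat
  assumes "group G"
    and "is_rep G n \<rho>" and "is_rep G n' \<rho>'"
    and "\<forall>g\<in>carrier G. det (\<rho> g) = det (\<rho>' g)"
    and "H \<lhd> G"
    and "abs_irreducible_on H n \<rho>" and "abs_irreducible_on H n' \<rho>'"
    and "rep_iso_on H n \<rho> n' \<rho>'"
  shows "\<exists>G'. subgroup G' G \<and> finite (rcosets\<^bsub>G\<^esub> G') \<and> rep_iso_on G' n \<rho> n' \<rho>'"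
proof -
  interpret G: group G by fact
  interpret N: normal H G using assms(5) .
  have nn: "n' = n" using assms(8) unfolding rep_iso_on_def by auto
  have n0: "n > 0" using assms(6) unfolding abs_irreducible_on_def irreducible_on_def by auto
  have rc: "\<And>g. g \<in> carrier G \<Longrightarrow> \<rho> g \<in> carrier_mat n n"
    and rm: "\<And>g h. g \<in> carrier G \<Longrightarrow> h \<in> carrier G \<Longrightarrow> \<rho> (g \<otimes>\<^bsub>G\<^esub> h) = \<rho> g * \<rho> h"
    and r1: "\<rho> \<one>\<^bsub>G\<^esub> = 1\<^sub>m n"
    using assms(2) unfolding is_rep_def by auto
  have rc': "\<And>g. g \<in> carrier G \<Longrightarrow> \<rho>' g \<in> carrier_mat n n"
    and rm': "\<And>g h. g \<in> carrier G \<Longrightarrow> h \<in> carrier G \<Longrightarrow> \<rho>' (g \<otimes>\<^bsub>G\<^esub> h) = \<rho>' g * \<rho>' h"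
    and r1': "\<rho>' \<one>\<^bsub>G\<^esub> = 1\<^sub>m n"
    using assms(3) nn unfolding is_rep_def by auto
  have ri: "\<rho> g * \<rho> (inv\<^bsub>G\<^esub> g) = 1\<^sub>m n" "\<rho> (inv\<^bsub>G\<^esub> g) * \<rho> g = 1\<^sub>m n"
    if "g \<in> carrier G" for g
    using rm[of g "inv\<^bsub>G\<^esub> g"] rm[of "inv\<^bsub>G\<^esub> g" g] that r1 by auto
  have ri': "\<rho>' g * \<rho>' (inv\<^bsub>G\<^esub> g) = 1\<^sub>m n" "\<rho>' (inv\<^bsub>G\<^esub> g) * \<rho>' g = 1\<^sub>m n"
    if "g \<in> carrier G" for g
    using rm'[of g "inv\<^bsub>G\<^esub> g"] rm'[of "inv\<^bsub>G\<^esub> g" g] that r1' by auto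
  obtain P where P: "P \<in> carrier_mat n n" "invertible_mat P"
    and PH: "\<forall>h\<in>H. P * \<rho> h = \<rho>' h * P"
    using assms(8) unfolding rep_iso_on_def by auto
  obtain P' where PP': "P * P' = 1\<^sub>m n" "P' * P = 1\<^sub>m (dim_row P')"
    using P unfolding invertible_mat_def inverts_mat_def by auto
  have P'c: "P' \<in> carrier_mat n n"
  proof -
    have "dim_col P' = n" using PP'(1) P by (metis index_mult_mat(3) index_one_mat(3))
    moreover have "dim_row P' = n" using PP'(2) P by (metis index_mult_mat(3) index_one_mat(3) carrier_matD(2))
    ultimately show ?thesis by auto
  qed
  have P'P: "P' * P = 1\<^sub>m n" using PP'(2) P'c by auto
  have detP: "det P \<noteq> 0"
    using det_mult[OF P(1) P'c] PP'(1) by auto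
  have Hc: "\<And>h. h \<in> H \<Longrightarrow> h \<in> carrier G" using N.subset by auto
  have key: "\<exists>c. c ^ n = 1 \<and> P * \<rho> g = c \<cdot>\<^sub>m (\<rho>' g * P)" if g: "g \<in> carrier G" for g
  proof -
    define A where "A = \<rho> g"
    define Ai where "Ai = \<rho> (inv\<^bsub>G\<^esub> g)"
    define B where "B = \<rho>' g"
    define Bi where "Bi = \<rho>' (inv\<^bsub>G\<^esub> g)"
    have cs: "A \<in> carrier_mat n n" "Ai \<in> carrier_mat n n" "B \<in> carrier_mat n n" "Bi \<in> carrier_mat n n"
      unfolding A_def Ai_def B_def Bi_def using g rc rc' by auto
    note cs = cs P(1) P'c
    define M where "M = P' * (Bi * (P * A))"
    have Mc: "M \<in> carrier_mat n n" unfolding M_def using cs by auto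
    have comm: "\<forall>h\<in>H. M * \<rho> h = \<rho> h * M"
    proof
      fix h assume h: "h \<in> H"
      define k where "k = g \<otimes>\<^bsub>G\<^esub> h \<otimes>\<^bsub>G\<^esub> inv\<^bsub>G\<^esub> g"
      have kH: "k \<in> H" unfolding k_def using N.inv_op_closed2 g h by auto
      have hc: "h \<in> carrier G" using Hc h .
      have kc: "k \<in> carrier G" using Hc kH .
      define R where "R = \<rho> h"
      define R' where "R' = \<rho>' h"
      have cR: "R \<in> carrier_mat n n" "R' \<in> carrier_mat n n" "\<rho> k \<in> carrier_mat n n" "\<rho>' k \<in> carrier_mat n n"
        unfolding R_def R'_def using rc rc' hc kc by auto
      have e1: "A * R = \<rho> k * A"
      proof -
        have "g \<otimes>\<^bsub>G\<^esub> h = k \<otimes>\<^bsub>G\<^esub> g" unfolding k_def using g hc by (simp add: G.m_assoc)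
        thus ?thesis unfolding A_def R_def using rm g hc kc by metis
      qed
      have e2: "Bi * \<rho>' k = R' * Bi"
      proof -
        have "inv\<^bsub>G\<^esub> g \<otimes>\<^bsub>G\<^esub> k = h \<otimes>\<^bsub>G\<^esub> inv\<^bsub>G\<^esub> g" unfolding k_def using g hc
          by (simp add: G.m_assoc[symmetric])
        thus ?thesis unfolding Bi_def R'_def using rm' g hc kc by (metis G.inv_closed)
      qed
      have e3: "P * \<rho> k = \<rho>' k * P" using PH kH by auto
      have e4: "P' * R' = R * P'"
      proof -
        have "P * R = R' * P" using PH h unfolding R_def R'_def by auto
        hence "P' * (P * R) * P' = P' * (R' * P) * P'" by simp
        moreover have "P' * (P * R) * P' = R * P'"
        proof -
          have "P' * (P * R) = P' * P * R" using cs cR by (intro assoc_mult_mat[symmetric]) auto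
          thus ?thesis using cs cR P'P by simp
        qed
        moreover have "P' * (R' * P) * P' = P' * R'"
        proof -
          have "P' * (R' * P) * P' = P' * ((R' * P) * P')" using cs cR by (intro assoc_mult_mat) auto
          also have "(R' * P) * P' = R' * (P * P')" using cs cR by (intro assoc_mult_mat) auto
          finally show ?thesis using cs cR PP'(1) by simp
        qed
        ultimately show ?thesis by simp
      qed
      have "M * R = P' * (Bi * (P * (A * R)))"
      proof -
        have a1: "P' * (Bi * (P * A)) * R = P' * ((Bi * (P * A)) * R)" using cs cR by (intro assoc_mult_mat) auto
        have a2: "(Bi * (P * A)) * R = Bi * ((P * A) * R)" using cs cR by (intro assoc_mult_mat) auto
        have a3: "(P * A) * R = P * (A * R)" using cs cR by (intro assoc_mult_mat) auto
        show ?thesis unfolding M_def a1 a2 a3 ..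
      qed
      also have "\<dots> = P' * (Bi * (P * \<rho> k * A))" using e1 cs cR
        by (simp add: assoc_mult_mat[of P n n "\<rho> k" n A n])
      also have "P * \<rho> k * A = \<rho>' k * (P * A)" using e3 cs cR
        by (simp add: assoc_mult_mat[of "\<rho>' k" n n P n A n])
      also have "Bi * (\<rho>' k * (P * A)) = R' * Bi * (P * A)" using e2 cs cR
        by (simp add: assoc_mult_mat[of Bi n n "\<rho>' k" n "P * A" n, symmetric])
      also have "P' * (R' * Bi * (P * A)) = P' * R' * (Bi * (P * A))" using cs cR
        by (simp add: assoc_mult_mat[of R' n n Bi n "P * A" n]
            assoc_mult_mat[of P' n n R' n "Bi * (P * A)" n])
      also have "\<dots> = R * M" using e4 cs cR unfolding M_def
        by (simp add: assoc_mult_mat[of R n n P' n "Bi * (P * A)" n])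
      finally show "M * \<rho> h = \<rho> h * M" unfolding R_def .
    qed
    obtain c where Mcc: "M = c \<cdot>\<^sub>m 1\<^sub>m n"
      using schur[OF assms(6) Mc _ comm] rc Hc by blast
    have "Bi * (P * A) = P * M" unfolding M_def using cs PP'(1)
      by (simp add: assoc_mult_mat[of P n n P' n "Bi * (P * A)" n, symmetric])
    also have "\<dots> = c \<cdot>\<^sub>m P" unfolding Mcc using cs
      by (simp add: mult_smult_distrib[of P n n "1\<^sub>m n" n c])
    finally have e5: "Bi * (P * A) = c \<cdot>\<^sub>m P" .
    have BBi: "B * Bi = 1\<^sub>m n" unfolding B_def Bi_def using ri' g by auto
    have "P * A = B * (Bi * (P * A))" using cs BBi
      by (simp add: assoc_mult_mat[of B n n Bi n "P * A" n, symmetric])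
    also have "\<dots> = c \<cdot>\<^sub>m (B * P)" using e5 cs by (simp add: mult_smult_distrib)
    finally have e6: "P * A = c \<cdot>\<^sub>m (B * P)" .
    have "det P * det A = c ^ n * (det B * det P)"
      using arg_cong[OF e6, of det] cs by (simp add: det_mult)
    moreover have "det A = det B" unfolding A_def B_def using assms(4) g by auto
    moreover have "det A \<noteq> 0"
      using det_mult[of A n Ai] cs ri g unfolding A_def Ai_def by auto
    ultimately have "c ^ n = 1" using detP by auto
    thus ?thesis using e6 unfolding A_def B_def by auto
  qed
  define cf where "cf g = (SOME c. c ^ n = 1 \<and> P * \<rho> g = c \<cdot>\<^sub>m (\<rho>' g * P))" for g
  have cf: "cf g ^ n = 1" "P * \<rho> g = cf g \<cdot>\<^sub>m (\<rho>' g * P)" if "g \<in> carrier G" for g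
    using someI_ex[OF key[OF that]] unfolding cf_def by auto
  define G' where "G' = {g \<in> carrier G. P * \<rho> g = \<rho>' g * P}"
  have sub: "subgroup G' G"
  proof (rule G.subgroupI)
    show "G' \<subseteq> carrier G" unfolding G'_def by auto
    show "G' \<noteq> {}" unfolding G'_def using r1 r1' P by auto
  next
    fix a assume a: "a \<in> G'"
    hence ac: "a \<in> carrier G" and ea: "P * \<rho> a = \<rho>' a * P" unfolding G'_def by auto
    have "1 \<cdot>\<^sub>m (P * \<rho> (inv\<^bsub>G\<^esub> a)) = \<rho>' (inv\<^bsub>G\<^esub> a) * P"
      by (rule mat_inv_rel[of "\<rho> a" n _ "\<rho>' a"]) (use ac rc rc' P ri ri' ea in auto)
    moreover have "1 \<cdot>\<^sub>m (P * \<rho> (inv\<^bsub>G\<^esub> a)) = P * \<rho> (inv\<^bsub>G\<^esub> a)"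
      by (rule eq_matI) auto
    ultimately show "inv\<^bsub>G\<^esub> a \<in> G'" unfolding G'_def using ac rc P by auto
  next
    fix a b assume "a \<in> G'" "b \<in> G'"
    hence ac: "a \<in> carrier G" "b \<in> carrier G" and e: "P * \<rho> a = \<rho>' a * P" "P * \<rho> b = \<rho>' b * P"
      unfolding G'_def by auto
    have "P * \<rho> (a \<otimes>\<^bsub>G\<^esub> b) = P * \<rho> a * \<rho> b" using rm ac rc P
      by (simp add: assoc_mult_mat[of P n n "\<rho> a" n "\<rho> b" n])
    also have "\<dots> = \<rho>' a * (P * \<rho> b)" using e ac rc rc' P
      by (simp add: assoc_mult_mat[of "\<rho>' a" n n P n "\<rho> b" n])
    also have "\<dots> = \<rho>' (a \<otimes>\<^bsub>G\<^esub> b) * P" using e ac rc rc' P rm'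
      by (simp add: assoc_mult_mat[of "\<rho>' a" n n "\<rho>' b" n P n])
    finally show "a \<otimes>\<^bsub>G\<^esub> b \<in> G'" unfolding G'_def using ac by auto
  qed
  have same: "G' #>\<^bsub>G\<^esub> g1 = G' #>\<^bsub>G\<^esub> g2"
    if g: "g1 \<in> carrier G" "g2 \<in> carrier G" "cf g1 = cf g2" for g1 g2
  proof -
    let ?c = "cf g2"
    have c0: "?c \<noteq> 0" using cf(1)[OF g(2)] n0 by (metis zero_neq_one zero_power)
    have ei: "?c \<cdot>\<^sub>m (P * \<rho> (inv\<^bsub>G\<^esub> g2)) = \<rho>' (inv\<^bsub>G\<^esub> g2) * P"
      by (rule mat_inv_rel[of "\<rho> g2" n _ "\<rho>' g2"]) (use g rc rc' P ri ri' cf in auto)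
    have "P * \<rho> (g1 \<otimes>\<^bsub>G\<^esub> inv\<^bsub>G\<^esub> g2) = P * \<rho> g1 * \<rho> (inv\<^bsub>G\<^esub> g2)" using rm g rc P
      by (simp add: assoc_mult_mat[of P n n "\<rho> g1" n "\<rho> (inv\<^bsub>G\<^esub> g2)" n])
    also have "\<dots> = ?c \<cdot>\<^sub>m (\<rho>' g1 * P) * \<rho> (inv\<^bsub>G\<^esub> g2)" using cf g by simp
    also have "\<dots> = \<rho>' g1 * (?c \<cdot>\<^sub>m (P * \<rho> (inv\<^bsub>G\<^esub> g2)))"
    proof -
      let ?X = "\<rho> (inv\<^bsub>G\<^esub> g2)"
      have cX: "?X \<in> carrier_mat n n" using rc[OF G.inv_closed[OF g(2)]] .
      have c1: "\<rho>' g1 \<in> carrier_mat n n" using rc' g by auto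
      have i1: "?c \<cdot>\<^sub>m (\<rho>' g1 * P) * ?X = ?c \<cdot>\<^sub>m ((\<rho>' g1 * P) * ?X)"
        by (rule mult_smult_assoc_mat) (use cX c1 P in auto)
      have i2: "(\<rho>' g1 * P) * ?X = \<rho>' g1 * (P * ?X)"
        by (rule assoc_mult_mat) (use cX c1 P in auto)
      have i3: "\<rho>' g1 * (?c \<cdot>\<^sub>m (P * ?X)) = ?c \<cdot>\<^sub>m (\<rho>' g1 * (P * ?X))"
        by (rule mult_smult_distrib) (use cX c1 P in auto)
      show ?thesis by (simp only: i1 i2 i3)
    qed
    also have "\<dots> = \<rho>' (g1 \<otimes>\<^bsub>G\<^esub> inv\<^bsub>G\<^esub> g2) * P" using ei g rc rc' P rm'
      by (simp add: assoc_mult_mat[of "\<rho>' g1" n n "\<rho>' (inv\<^bsub>G\<^esub> g2)" n P n])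
    finally have "g1 \<otimes>\<^bsub>G\<^esub> inv\<^bsub>G\<^esub> g2 \<in> G'" unfolding G'_def using g by auto
    hence "g1 \<in> G' #>\<^bsub>G\<^esub> g2" using subgroup.rcos_module_rev[OF sub assms(1)] g by auto
    thus ?thesis using G.repr_independence[OF _ g(2) sub] by auto
  qed
  have fin_roots: "finite {c :: 'k. c ^ n = 1}"
  proof -
    have ne: "monom (1::'k) n - 1 \<noteq> 0"
    proof
      assume "monom (1::'k) n - 1 = 0"
      hence "coeff (monom (1::'k) n - 1) n = 0" by simp
      thus False using n0 by (simp add: coeff_monom)
    qed
    have "{c :: 'k. c ^ n = 1} \<subseteq> {x. poly (monom 1 n - 1) x = 0}" by (auto simp: poly_monom)
    thus ?thesis using poly_roots_finite[OF ne] finite_subset by blast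
  qed
  have "rcosets\<^bsub>G\<^esub> G' \<subseteq> (\<lambda>a. G' #>\<^bsub>G\<^esub> (SOME g. g \<in> carrier G \<and> cf g = a)) ` {c. c ^ n = 1}"
    unfolding RCOSETS_def
  proof (intro UN_least subsetI)
    fix g Y assume g: "g \<in> carrier G" and Y: "Y \<in> {G' #>\<^bsub>G\<^esub> g}"
    define g0 where "g0 = (SOME g'. g' \<in> carrier G \<and> cf g' = cf g)"
    have g0: "g0 \<in> carrier G \<and> cf g0 = cf g" unfolding g0_def by (rule someI[of _ g]) (use g in auto)
    have "Y = G' #>\<^bsub>G\<^esub> g0" using same[of g g0] g g0 Y by auto
    thus "Y \<in> (\<lambda>a. G' #>\<^bsub>G\<^esub> (SOME g. g \<in> carrier G \<and> cf g = a)) ` {c. c ^ n = 1}"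
      using cf(1)[OF g] unfolding g0_def by auto
  qed
  hence fin: "finite (rcosets\<^bsub>G\<^esub> G')" using fin_roots finite_subset by blast
  have "rep_iso_on G' n \<rho> n' \<rho>'" unfolding rep_iso_on_def G'_def using nn P by auto
  with sub fin show ?thesis by blast
qed

end
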